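(* Let $p$ be a prime and $n\ge 1$. Let $f_0,f_1,\ldots,f_{p-1}$ be near-bent functions from $\mathbb{F}_{p^n}$ to $\mathbb{F}_p$ such that $\mathrm{supp}(\widehat{f_i})\cap \mathrm{supp}(\widehat{f_j})=\emptyset$ for all $0\le i\ne j\le p-1$. Then the function $F:\mathbb{F}_{p^n}\times\mathbb{F}_p\to\mathbb{F}_p$ defined by \[ F(x,y)=(p-1)\sum_{k=0}^{p-1}\Big(\prod_{j\in\mathbb{F}_p,\, j\ne k}(y-j)\Big)f_k(x) \] is bent (as a function on the $(n+1)$-dimensional $\mathbb{F}_p$-space $\mathbb{F}_{p^n}\times\mathbb{F}_p$, with inner product $\langle (a,b),(x,y)\rangle=\mathrm{Tr}_n(ax)+by$).
   Context: $\epsilon_p=e^{2\pi i/p}$ and $\mathrm{Tr}_n$ is the absolute trace from $\mathbb{F}_{p^n}$ to $\mathbb{F}_p$. For $f:\mathbb{F}_{p^n}\to\mathbb{F}_p$ the Fourier transform is $\widehat{f}(b)=\sum_{x\in\mathbb{F}_{p^n}}\epsilon_p^{f(x)-\mathrm{Tr}_n(bx)}$; more generally for a function $g$ on an $m$-dimensional $\mathbb{F}_p$-space $V$ with inner product $\langle\cdot,\cdot\rangle$, $\widehat{g}(b)=\sum_{x\in V}\epsilon_p^{g(x)-\langle b,x\rangle}$. $g$ is bent if $|\widehat{g}(b)|^2=p^m$ for all $b$. A function $f:\mathbb{F}_{p^n}\to\mathbb{F}_p$ is near-bent if $|\widehat{f}(b)|^2\in\{0,p^{n+1}\}$ for all $b\in\mathbb{F}_{p^n}$.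 $\mathrm{supp}(\widehat f)=\{b\in\mathbb{F}_{p^n}:\widehat f(b)\neq 0\}$. *)

theory Defs
  imports "HOL-Analysis.Analysis"
begin

(* F_p is represented by the integers, read modulo p (all notions below only
   depend on residues mod p).  F_{p^n} is a finite field type 'a with
   CHAR('a) = p and CARD('a) = p^n. *)

definition eps :: "nat \<Rightarrow> int \<Rightarrow> complex" where
  "eps p k = cis (2 * pi * real_of_int k / real p)"

definition trace_field :: "nat \<Rightarrow> nat \<Rightarrow> 'a::field \<Rightarrow> 'a" where
  "trace_field p n x = (\<Sum>i<n. x ^ (p ^ i))"

(* the trace as a residue in {0..<p} (the trace lies in the prime field) *)
definition Tr :: "nat \<Rightarrow> nat \<Rightarrow> 'a::field \<Rightarrow> int" where
  "Tr p n x = (THE k. k \<in> {0..<int p} \<and> of_int k = trace_field p n x)"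

definition walsh :: "nat \<Rightarrow> nat \<Rightarrow> ('a::{field,finite} \<Rightarrow> int) \<Rightarrow> 'a \<Rightarrow> complex" where
  "walsh p n f b = (\<Sum>x\<in>UNIV. eps p (f x - Tr p n (b * x)))"

definition near_bent :: "nat \<Rightarrow> nat \<Rightarrow> ('a::{field,finite} \<Rightarrow> int) \<Rightarrow> bool" where
  "near_bent p n f \<longleftrightarrow> (\<forall>b. (cmod (walsh p n f b))^2 \<in> {0, real p ^ (n+1)})"

definition supp_walsh :: "nat \<Rightarrow> nat \<Rightarrow> ('a::{field,finite} \<Rightarrow> int) \<Rightarrow> 'a set" where
  "supp_walsh p n f = {b. walsh p n f b \<noteq> 0}"

definition walsh2 :: "nat \<Rightarrow> nat \<Rightarrow> ('a::{field,finite} \<Rightarrow> int \<Rightarrow> int) \<Rightarrow> 'a \<Rightarrow> int \<Rightarrow> complex" where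
  "walsh2 p n G a b = (\<Sum>x\<in>UNIV. \<Sum>y\<in>{0..<int p}. eps p (G x y - Tr p n (a * x) - b * y))"

definition bent2 :: "nat \<Rightarrow> nat \<Rightarrow> ('a::{field,finite} \<Rightarrow> int \<Rightarrow> int) \<Rightarrow> bool" where
  "bent2 p n G \<longleftrightarrow> (\<forall>a. \<forall>b\<in>{0..<int p}. (cmod (walsh2 p n G a b))^2 = real p ^ (n+1))"

end

theory Submission imports Defs "HOL-Number_Theory.Number_Theory" "HOL-Library.Real_Mod" "HOL-Computational_Algebra.Computational_Algebra" begin

lemma eps_add: "eps p (a + b) = eps p a * eps p b"
  unfolding eps_def by (simp add: cis_mult add_divide_distrib distrib_left)
lemma eps_mult_p: "p > 0 \<Longrightarrow> eps p (int p * k) = 1"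
proof -
  assume "p > 0"
  hence "2 * pi * real_of_int (int p * k) / real p = 2 * pi * real_of_int k" by simp
  thus ?thesis unfolding eps_def by (simp add: Ints_of_int)
qed
lemma eps_cong: assumes "p > 0" "[a = b] (mod int p)" shows "eps p a = eps p b"
proof -
  obtain k where "a = b + int p * k" using assms(2) by (metis cong_iff_lin cong_sym)
  thus ?thesis using eps_add eps_mult_p[OF assms(1)] by simp
qed
lemma eps_eq_1: assumes "p > 0" "eps p a = 1" shows "int p dvd a"
proof -
  from assms(2) obtain m where "2 * pi * real_of_int a / real p = of_int m * (2*pi)"
    unfolding eps_def cis_eq_1_iff by blast
  hence "real_of_int a = of_int m * real p" using assms(1) by (simp add: field_simps)
  hence "a = m * int p" by (metis of_int_eq_iff of_int_mult of_int_of_nat_eq)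
  thus ?thesis by simp
qed
lemma norm_eps[simp]: "norm (eps p a) = 1" by (simp add: eps_def)
lemma cnj_eps: "cnj (eps p a) = eps p (-a)" by (simp add: eps_def cis_cnj)
lemma wil: assumes "prime p" shows "[int (fact (p - 1)) = - 1] (mod int p)"
  using wilson_theorem[OF assms] by (simp add: of_nat_fact)

lemma prod_self_cong:
  assumes pr: "prime p" and y: "y \<in> {0..<int p}"
  shows "[(\<Prod>j\<in>{0..<int p}-{y}. (y - j)) = -1] (mod int p)"
proof -
  define h where "h j = nat ((y - j) mod int p)" for j
  have p0: "p > 0" using pr prime_gt_0_nat by blast
  have inj: "inj_on h ({0..<int p}-{y})"
  proof (rule inj_onI)
    fix a b assume a: "a \<in> {0..<int p}-{y}" and b: "b \<in> {0..<int p}-{y}" and e: "h a = h b"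
    have "(y - a) mod int p \<ge> 0" "(y - b) mod int p \<ge> 0" using p0 by simp_all
    hence "(y - a) mod int p = (y - b) mod int p" using e unfolding h_def
      using eq_nat_nat_iff by blast
    hence "[y - a = y - b] (mod int p)" by (simp add: cong_def)
    hence "int p dvd (b - a)" by (simp add: cong_iff_dvd_diff)
    hence "[b = a] (mod int p)" by (simp add: cong_iff_dvd_diff)
    hence "[a = b] (mod int p)" by (rule cong_sym)
    thus "a = b" using a b by (simp add: cong_def)
  qed
  have img: "h ` ({0..<int p}-{y}) \<subseteq> {1..p-1}"
  proof
    fix m assume "m \<in> h ` ({0..<int p}-{y})"
    then obtain j where j: "j \<in> {0..<int p}-{y}" "m = h j" by blast
    have "(y - j) mod int p \<noteq> 0"
    proof
      assume "(y - j) mod int p = 0"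
      hence "[y = j] (mod int p)" by (simp add: cong_iff_dvd_diff dvd_eq_mod_eq_0)
      thus False using j y by (simp add: cong_def)
    qed
    moreover have "(y - j) mod int p \<ge> 0" "(y - j) mod int p < int p" using p0 by auto
    ultimately have r: "0 < (y - j) mod int p" "(y - j) mod int p < int p" by auto
    have "1 \<le> nat ((y - j) mod int p)" "nat ((y - j) mod int p) \<le> p - 1" using r by arith+
    thus "m \<in> {1..p-1}" using j unfolding h_def by auto
  qed
  have "card (h ` ({0..<int p}-{y})) = p - 1" using inj y by (simp add: card_image)
  hence "h ` ({0..<int p}-{y}) = {1..p-1}" using img by (intro card_subset_eq) auto
  hence bij: "bij_betw h ({0..<int p}-{y}) {1..p-1}" using inj by (simp add: bij_betw_def)
  have "[(\<Prod>j\<in>{0..<int p}-{y}. (y - j)) = (\<Prod>j\<in>{0..<int p}-{y}. int (h j))] (mod int p)"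
    by (rule cong_prod) (use p0 in \<open>simp add: h_def cong_def\<close>)
  also have "(\<Prod>j\<in>{0..<int p}-{y}. int (h j)) = (\<Prod>m\<in>{1..p-1}. int m)"
    using prod.reindex_bij_betw[OF bij, of int] .
  also have "\<dots> = int (fact (p - 1))" by (simp add: fact_prod)
  finally show ?thesis using wil[OF pr] cong_trans by blast
qed

lemma field_pow_card: "(x::'a::{field,finite}) ^ CARD('a) = x"
proof (cases "x = 0")
  case False
  have "x * (\<Prod>y\<in>UNIV-{0}. x * y) = x * x ^ (card (UNIV :: 'a set) - 1) * \<Prod>(UNIV-{0})"
    by (simp add: prod.distrib mult_ac)
  also have "x * x ^ (card (UNIV :: 'a set) - 1) = x ^ Suc (card (UNIV :: 'a set) - 1)"
    by (subst power_Suc) auto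
  also have "Suc (card (UNIV :: 'a set) - 1) = card (UNIV :: 'a set)"
    using finite_UNIV_card_ge_0[where ?'a = 'a] by simp
  also have "(\<Prod>y\<in>UNIV-{0}. x * y) = (\<Prod>y\<in>UNIV-{0}. y)"
    by (rule prod.reindex_bij_witness[of _ "\<lambda>y. y / x" "\<lambda>y. x * y"]) (use False in auto)
  finally show ?thesis
    by simp
qed (use finite_UNIV_card_ge_0[where ?'a = 'a] in auto)

context
  fixes p n :: nat
  assumes pr: "prime p" and ch: "CHAR('a::{field,finite}) = p" and cd: "CARD('a) = p ^ n"
    and n1: "n \<ge> 1"
begin

lemma p0: "p > 0" using pr prime_gt_0_nat by blast
lemma p1: "p > 1" using pr prime_gt_1_nat by blast

lemma frob_pow: "(x + y :: 'a) ^ (p^i) = x^(p^i) + y^(p^i)"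
  by (rule freshmans_dream') (use pr ch in auto)

lemma T_add: "trace_field p n (x + y) = trace_field p n x + trace_field p n (y::'a)"
  unfolding trace_field_def by (simp add: frob_pow sum.distrib)

lemma T_pow: "trace_field p n (x::'a) ^ p = trace_field p n x"
proof -
  define g where "g i = x ^ (p ^ i)" for i
  have "(\<Sum>i<n. g i) ^ p = (\<Sum>i<n. g i ^ p)"
    by (rule freshmans_dream_sum) (use pr ch in auto)
  also have "\<dots> = (\<Sum>i<n. g (Suc i))"
    by (simp add: g_def power_mult[symmetric] mult.commute)
  also have "\<dots> = (\<Sum>i<n. g i)"
  proof -
    have "g n = g 0" using field_pow_card[of x] cd by (simp add: g_def)
    have A: "(\<Sum>i<Suc n. g i) = g 0 + (\<Sum>i<n. g (Suc i))" by (rule sum.lessThan_Suc_shift)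
    have B: "(\<Sum>i<Suc n. g i) = (\<Sum>i<n. g i) + g n" by (rule sum.lessThan_Suc)
    show ?thesis using A B \<open>g n = g 0\<close> by simp
  qed
  finally show ?thesis unfolding trace_field_def g_def .
qed

lemma of_nat_pow_p: "(of_nat k :: 'a) ^ p = of_nat k"
proof (induction k)
  case 0 thus ?case using p0 by simp
next
  case (Suc k)
  have "(of_nat k + 1 :: 'a) ^ p = of_nat k ^ p + 1 ^ p"
    by (rule freshmans_dream) (use pr ch in auto)
  thus ?case using Suc by (simp add: add.commute)
qed

lemma of_int_eq_iff_cong: "(of_int a :: 'a) = of_int b \<longleftrightarrow> [a = b] (mod int p)"
proof -
  have "(of_int a :: 'a) = of_int b \<longleftrightarrow> (of_int (a - b) :: 'a) = 0" by simp
  also have "\<dots> \<longleftrightarrow> int CHAR('a) dvd (a - b)" by (rule of_int_eq_0_iff_char_dvd)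
  finally show ?thesis using ch by (simp add: cong_iff_dvd_diff)
qed

lemma roots_p: "card {t::'a. t^p = t} \<le> p"
proof -
  define P where "P = Polynomial.monom (1::'a) p + [:0, -1:]"
  have "degree P = p" unfolding P_def using p1
    by (subst degree_add_eq_left) (auto simp: degree_monom_eq)
  hence "P \<noteq> 0" using p1 by auto
  have "{t::'a. t^p = t} = {t. poly P t = 0}" by (auto simp: P_def poly_monom)
  thus ?thesis using card_poly_roots_bound[OF \<open>P \<noteq> 0\<close>] \<open>degree P = p\<close> by simp
qed

lemma T_in: "\<exists>k \<in> {0..<int p}. of_int k = trace_field p n (x::'a)"
proof -
  define R where "R = {t::'a. t^p = t}"
  define S where "S = (of_nat ` {0..<p} :: 'a set)"
  have "S \<subseteq> R" unfolding S_def R_def using of_nat_pow_p by auto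
  have "inj_on (of_nat :: nat \<Rightarrow> 'a) {0..<p}"
  proof (rule inj_onI)
    fix a b assume a: "a \<in> {0..<p}" and b: "b \<in> {0..<p}" and e: "(of_nat a :: 'a) = of_nat b"
    hence "(of_int (int a) :: 'a) = of_int (int b)" by simp
    hence "[int a = int b] (mod int p)" using of_int_eq_iff_cong by blast
    thus "a = b" using a b by (simp add: cong_def)
  qed
  hence "card S = p" unfolding S_def by (simp add: card_image)
  have "card S \<le> card R" using \<open>S \<subseteq> R\<close> by (intro card_mono) auto
  hence "card R = card S" using roots_p \<open>card S = p\<close> unfolding R_def by linarith
  have "S = R" by (rule card_subset_eq) (use \<open>S \<subseteq> R\<close> \<open>card R = card S\<close> in auto)
  moreover have "trace_field p n x \<in> R" unfolding R_def using T_pow by simp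
  ultimately obtain k where "k < p" "of_nat k = trace_field p n x" unfolding S_def by auto
  thus ?thesis by (intro bexI[of _ "int k"]) auto
qed

lemma Tr_prop: "Tr p n x \<in> {0..<int p} \<and> of_int (Tr p n x) = trace_field p n (x::'a)"
  unfolding Tr_def
proof (rule theI')
  show "\<exists>!k. k \<in> {0..<int p} \<and> of_int k = trace_field p n x"
  proof -
    obtain k where k: "k \<in> {0..<int p}" "of_int k = trace_field p n x" using T_in by blast
    have "k' = k" if "k' \<in> {0..<int p}" "of_int k' = trace_field p n x" for k'
    proof -
      have "[k' = k] (mod int p)" using that k of_int_eq_iff_cong by metis
      thus ?thesis using that k by (simp add: cong_def)
    qed
    thus ?thesis using k by blast
  qed
qed

lemma Tr_add: "[Tr p n (x + y) = Tr p n x + Tr p n (y::'a)] (mod int p)"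
proof -
  have "(of_int (Tr p n (x + y)) :: 'a) = of_int (Tr p n x + Tr p n y)"
    using Tr_prop T_add by simp
  thus ?thesis using of_int_eq_iff_cong by blast
qed

lemma Tr_0: "[Tr p n (0::'a) = 0] (mod int p)"
proof -
  have "trace_field p n (0::'a) = 0" unfolding trace_field_def using p0 by (simp add: power_0_left)
  hence "(of_int (Tr p n (0::'a)) :: 'a) = of_int 0" using Tr_prop by simp
  thus ?thesis using of_int_eq_iff_cong by blast
qed

lemma Tr_diff: "[Tr p n (x - y) = Tr p n x - Tr p n (y::'a)] (mod int p)"
proof -
  have "[Tr p n (x - y + y) = Tr p n (x - y) + Tr p n y] (mod int p)" by (rule Tr_add)
  hence "[Tr p n x = Tr p n (x - y) + Tr p n y] (mod int p)" by simp
  hence "[Tr p n x - Tr p n y = Tr p n (x - y)] (mod int p)"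
    by (metis cong_diff cong_refl add_diff_cancel_right')
  thus ?thesis by (rule cong_sym)
qed


lemma T_nonzero: "\<exists>y::'a. trace_field p n y \<noteq> 0"
proof (rule ccontr)
  assume "\<not> ?thesis"
  hence all0: "\<And>y::'a. trace_field p n y = 0" by blast
  define Q where "Q = (\<Sum>i<n. Polynomial.monom (1::'a) (p^i))"
  have polyQ: "poly Q y = trace_field p n y" for y
    unfolding Q_def trace_field_def by (simp add: poly_sum poly_monom)
  have coeffQ: "Polynomial.coeff Q m = (\<Sum>i<n. if p^i = m then 1 else 0)" for m
    unfolding Q_def by (simp add: coeff_sum coeff_monom)
  have "Polynomial.coeff Q (p^(n-1)) = (\<Sum>i<n. if i = n - 1 then 1 else 0)"
    unfolding coeffQ using p1 by (intro sum.cong) (auto simp: power_inject_exp)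
  also have "\<dots> = 1" using n1 by simp
  finally have "Q \<noteq> 0" by auto
  have "degree Q \<le> p^(n-1)"
  proof (rule degree_le, intro allI impI)
    fix m assume m: "p^(n-1) < m"
    have "p^i \<noteq> m" if "i < n" for i
    proof -
      have "p^i \<le> p^(n-1)" using that p1 by (intro power_increasing) auto
      thus ?thesis using m by auto
    qed
    thus "Polynomial.coeff Q m = 0" unfolding coeffQ by simp
  qed
  have "UNIV = {y::'a. poly Q y = 0}" using polyQ all0 by auto
  hence "CARD('a) \<le> p^(n-1)" using card_poly_roots_bound[OF \<open>Q \<noteq> 0\<close>] \<open>degree Q \<le> _\<close> by simp
  moreover have "p^(n-1) < p^n" using p1 n1 by (intro power_strict_increasing) auto
  ultimately show False using cd by simp
qed

lemma charsum: "(\<Sum>b\<in>UNIV. eps p (Tr p n (b * x))) = (if x = 0 then of_nat (p^n) else (0::complex))"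
  for x :: 'a
proof (cases "x = 0")
  case True
  have "eps p (Tr p n (b * x)) = 1" for b
    using eps_cong[OF p0 Tr_0] True by (simp add: eps_def)
  thus ?thesis using True cd by simp
next
  case False
  obtain y :: 'a where y: "trace_field p n y \<noteq> 0" using T_nonzero by blast
  define b0 where "b0 = y / x"
  have b0x: "b0 * x = y" using False by (simp add: b0_def)
  define c where "c = Tr p n y"
  have "eps p c \<noteq> 1"
  proof
    assume "eps p c = 1"
    hence "int p dvd c" using eps_eq_1 p0 by blast
    hence "(of_int c :: 'a) = 0" using of_int_eq_0_iff_char_dvd[where 'a='a] ch by simp
    thus False using y Tr_prop[of y] by (simp add: c_def)
  qed
  define S where "S = (\<Sum>b\<in>UNIV. eps p (Tr p n (b * x)))"
  have "S = (\<Sum>b\<in>UNIV. eps p (Tr p n ((b + b0) * x)))"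
    unfolding S_def by (rule sum.reindex_bij_witness[of _ "\<lambda>b. b + b0" "\<lambda>b. b - b0"]) auto
  also have "\<dots> = (\<Sum>b\<in>UNIV. eps p (Tr p n (b * x)) * eps p c)"
  proof (rule sum.cong)
    fix b
    have "[Tr p n (b * x + y) = Tr p n (b * x) + c] (mod int p)" unfolding c_def by (rule Tr_add)
    hence "eps p (Tr p n ((b + b0) * x)) = eps p (Tr p n (b * x) + c)"
      using eps_cong[OF p0] b0x by (simp add: distrib_right)
    thus "eps p (Tr p n ((b + b0) * x)) = eps p (Tr p n (b * x)) * eps p c" by (simp add: eps_add)
  qed simp
  also have "\<dots> = S * eps p c" unfolding S_def by (simp add: sum_distrib_right)
  finally have "S * (1 - eps p c) = 0" by (simp add: algebra_simps)
  hence "S = 0" using \<open>eps p c \<noteq> 1\<close> by simp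
  thus ?thesis using False S_def by simp
qed

lemma parseval: "(\<Sum>b\<in>UNIV. (cmod (walsh p n g b))^2) = real p ^ (2*n)"
  for g :: "'a \<Rightarrow> int"
proof -
  define A where "A x = eps p (g x)" for x
  have AA: "A x * cnj (A x) = 1" for x
    unfolding A_def cnj_eps eps_add[symmetric] by (simp add: eps_def)
  have W: "walsh p n g b = (\<Sum>x\<in>UNIV. A x * eps p (- Tr p n (b * x)))" for b
    unfolding walsh_def A_def by (simp add: eps_add[symmetric])
  have sq: "complex_of_real ((cmod (walsh p n g b))^2)
      = (\<Sum>x\<in>UNIV. \<Sum>z\<in>UNIV. A x * cnj (A z) * eps p (Tr p n (b * (z - x))))" for b
  proof -
    have "complex_of_real ((cmod (walsh p n g b))^2) = walsh p n g b * cnj (walsh p n g b)"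
      using complex_norm_square[of "walsh p n g b"] by simp
    also have "\<dots> = (\<Sum>x\<in>UNIV. A x * eps p (- Tr p n (b * x))) *
                    (\<Sum>z\<in>UNIV. cnj (A z) * eps p (Tr p n (b * z)))"
      unfolding W by (simp add: cnj_eps)
    also have "\<dots> = (\<Sum>x\<in>UNIV. \<Sum>z\<in>UNIV. A x * cnj (A z) * (eps p (- Tr p n (b * x)) * eps p (Tr p n (b * z))))"
      by (simp add: sum_product mult_ac)
    also have "\<dots> = (\<Sum>x\<in>UNIV. \<Sum>z\<in>UNIV. A x * cnj (A z) * eps p (Tr p n (b * (z - x))))"
    proof (intro sum.cong refl)
      fix x z
      have "[Tr p n (b * z - b * x) = Tr p n (b * z) - Tr p n (b * x)] (mod int p)" by (rule Tr_diff)
      hence "eps p (Tr p n (b * (z - x))) = eps p (- Tr p n (b * x) + Tr p n (b * z))"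
        using eps_cong[OF p0] by (simp add: right_diff_distrib)
      thus "A x * cnj (A z) * (eps p (- Tr p n (b * x)) * eps p (Tr p n (b * z))) =
            A x * cnj (A z) * eps p (Tr p n (b * (z - x)))"
        by (simp add: eps_add[symmetric])
    qed
    finally show ?thesis .
  qed
  have "complex_of_real (\<Sum>b\<in>UNIV. (cmod (walsh p n g b))^2)
      = (\<Sum>b\<in>UNIV. \<Sum>x\<in>UNIV. \<Sum>z\<in>UNIV. A x * cnj (A z) * eps p (Tr p n (b * (z - x))))"
    by (simp only: of_real_sum sq)
  also have "\<dots> = (\<Sum>x\<in>UNIV. \<Sum>z\<in>UNIV. A x * cnj (A z) * (\<Sum>b\<in>UNIV. eps p (Tr p n (b * (z - x)))))"
  proof -
    define F where "F b x z = A x * cnj (A z) * eps p (Tr p n (b * (z - x)))" for b x z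
    have "(\<Sum>b\<in>UNIV. \<Sum>x\<in>UNIV. \<Sum>z\<in>UNIV. F b x z) = (\<Sum>x\<in>UNIV. \<Sum>b\<in>UNIV. \<Sum>z\<in>UNIV. F b x z)"
      by (rule sum.swap)
    also have "\<dots> = (\<Sum>x\<in>UNIV. \<Sum>z\<in>UNIV. \<Sum>b\<in>UNIV. F b x z)"
    proof -
      have sw: "(\<Sum>b\<in>UNIV. \<Sum>z\<in>UNIV. F b x z) = (\<Sum>z\<in>UNIV. \<Sum>b\<in>UNIV. F b x z)" for x
        by (rule sum.swap)
      show ?thesis by (simp only: sw)
    qed
    finally show ?thesis unfolding F_def by (simp only: sum_distrib_left)
  qed
  also have "\<dots> = (\<Sum>x\<in>UNIV. \<Sum>z\<in>UNIV. A x * cnj (A z) * (if z = x then of_nat (p^n) else 0))"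
    by (intro sum.cong refl) (simp only: charsum right_minus_eq)
  also have "\<dots> = (\<Sum>x\<in>(UNIV::'a set). (of_nat (p^n) :: complex))"
  proof (rule sum.cong[OF refl])
    fix x
    have "(\<Sum>z\<in>UNIV. A x * cnj (A z) * (if z = x then of_nat (p^n) else 0))
        = (\<Sum>z\<in>UNIV. if z = x then A x * cnj (A z) * of_nat (p^n) else (0::complex))"
      by (intro sum.cong refl) simp
    also have "\<dots> = A x * cnj (A x) * of_nat (p^n)" by simp
    also have "\<dots> = of_nat (p^n)" by (simp only: AA mult_1)
    finally show "(\<Sum>z\<in>UNIV. A x * cnj (A z) * (if z = x then of_nat (p^n) else 0)) = of_nat (p^n)" .
  qed
  also have "\<dots> = of_nat (p^n) * of_nat (p^n)" using cd by simp
  also have "\<dots> = complex_of_real (real p ^ (2*n))" by (simp add: power_mult power2_eq_square power_mult_distrib)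
  finally show ?thesis using of_real_eq_iff by blast
qed


lemma supp_card:
  fixes g :: "'a \<Rightarrow> int"
  assumes nb: "near_bent p n g"
  shows "card (supp_walsh p n g) = p^(n-1)"
proof -
  define S where "S = supp_walsh p n g"
  have tm: "(cmod (walsh p n g b))^2 = (if b \<in> S then real p ^ (n+1) else 0)" for b
  proof (cases "b \<in> S")
    case True
    hence "(cmod (walsh p n g b))^2 \<noteq> 0" by (simp add: S_def supp_walsh_def)
    thus ?thesis using nb True unfolding near_bent_def by auto
  next
    case False thus ?thesis by (simp add: S_def supp_walsh_def)
  qed
  have "real p ^ (2*n) = (\<Sum>b\<in>UNIV. (cmod (walsh p n g b))^2)" by (rule parseval[symmetric])
  also have "\<dots> = (\<Sum>b\<in>UNIV. if b \<in> S then real p ^ (n+1) else 0)" by (simp only: tm)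
  also have "\<dots> = real (card S) * real p ^ (n+1)"
    by (simp add: sum.If_cases Int_def)
  finally have fin: "real p ^ (2*n) = real (card S) * real p ^ (n+1)" .
  have ex: "2*n = (n-1)+(n+1)" using n1 by simp
  have "real p ^ (2*n) = real p ^ (n-1) * real p ^ (n+1)" by (simp only: ex power_add)
  hence e: "real (card S) * real p ^ (n+1) = real p ^ (n-1) * real p ^ (n+1)"
    using fin by linarith
  have "real p ^ (n+1) \<noteq> 0" using p0 by simp
  hence "real (card S) = real p ^ (n-1)" using e by simp
  hence "card S = p^(n-1)" by (simp only: of_nat_power[symmetric] of_nat_eq_iff)
  thus ?thesis by (simp add: S_def)
qed

lemma G_cong:
  fixes f :: "nat \<Rightarrow> 'a \<Rightarrow> int"
  assumes y: "y \<in> {0..<int p}"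
  shows "[(int p - 1) * (\<Sum>k<p. (\<Prod>j\<in>{0..<int p} - {int k}. (y - j)) * f k x) = f (nat y) x] (mod int p)"
proof -
  define P where "P k = (\<Prod>j\<in>{0..<int p} - {int k}. (y - j))" for k
  have yn: "int (nat y) = y" "nat y < p" using y by auto
  have "(\<Sum>k<p. P k * f k x) = (\<Sum>k<p. if k = nat y then P k * f k x else 0)"
  proof (rule sum.cong[OF refl])
    fix k assume "k \<in> {..<p}"
    show "P k * f k x = (if k = nat y then P k * f k x else 0)"
    proof (cases "k = nat y")
      case False
      have "y \<noteq> int k" using False by auto
      hence "y \<in> {0..<int p} - {int k}" using y by blast
      hence "P k = 0" unfolding P_def by (intro prod_zero) auto
      thus ?thesis using False by simp
    qed simp
  qed
  also have "\<dots> = P (nat y) * f (nat y) x" using yn by simp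
  finally have s: "(\<Sum>k<p. P k * f k x) = P (nat y) * f (nat y) x" .
  have "[P (nat y) = -1] (mod int p)" unfolding P_def using prod_self_cong[OF pr y] yn by simp
  hence "[(int p - 1) * (P (nat y) * f (nat y) x) = (int p - 1) * (-1 * f (nat y) x)] (mod int p)"
    by (intro cong_mult cong_refl)
  moreover have "[(int p - 1) * (-1 * f (nat y) x) = f (nat y) x] (mod int p)"
    by (simp add: cong_iff_dvd_diff algebra_simps)
  ultimately have "[(int p - 1) * (P (nat y) * f (nat y) x) = f (nat y) x] (mod int p)"
    by (rule cong_trans)
  thus ?thesis using s unfolding P_def by simp
qed

lemma main:
  fixes f :: "nat \<Rightarrow> 'a \<Rightarrow> int"
  assumes nb: "\<And>k. k < p \<Longrightarrow> near_bent p n (f k)"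
    and dj: "\<And>i j. i < p \<Longrightarrow> j < p \<Longrightarrow> i \<noteq> j \<Longrightarrow>
           supp_walsh p n (f i) \<inter> supp_walsh p n (f j) = {}"
  shows "bent2 p n (\<lambda>x y. (int p - 1) *
           (\<Sum>k<p. (\<Prod>j\<in>{0..<int p} - {int k}. (y - j)) * f k x))"
  unfolding bent2_def
proof (intro allI ballI)
  fix a :: 'a and b :: int
  assume b: "b \<in> {0..<int p}"
  define G where "G x y = (int p - 1) * (\<Sum>k<p. (\<Prod>j\<in>{0..<int p} - {int k}. (y - j)) * f k x)" for x y
  define U where "U = (\<Union>k\<in>{..<p}. supp_walsh p n (f k))"
  have "card U = (\<Sum>k\<in>{..<p}. card (supp_walsh p n (f k)))"
    unfolding U_def by (intro card_UN_disjoint) (use dj in auto)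
  also have "\<dots> = p * p^(n-1)" using supp_card nb by simp
  also have "\<dots> = p^n"
  proof -
    obtain m where "n = Suc m" using n1 by (cases n) auto
    thus ?thesis by simp
  qed
  finally have "card U = CARD('a)" using cd by simp
  hence "U = UNIV" by (intro card_subset_eq) auto
  then obtain k0 where k0: "k0 < p" "a \<in> supp_walsh p n (f k0)" unfolding U_def by blast
  have W0: "walsh p n (f k) a = 0" if "k < p" "k \<noteq> k0" for k
    using dj[OF that(1) k0(1) that(2)] k0(2) by (auto simp: supp_walsh_def)
  have "walsh2 p n G a b = (\<Sum>x\<in>UNIV. \<Sum>y\<in>{0..<int p}. eps p (- (b * y)) * eps p (f (nat y) x - Tr p n (a * x)))"
    unfolding walsh2_def
  proof (intro sum.cong refl)
    fix x y assume y: "y \<in> {0..<int p}"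
    have "[G x y - Tr p n (a * x) - b * y = (f (nat y) x - Tr p n (a * x)) + - (b * y)] (mod int p)"
    proof -
      have "[G x y - Tr p n (a * x) - b * y = f (nat y) x - Tr p n (a * x) - b * y] (mod int p)"
        using G_cong[OF y, of f x] unfolding G_def by (intro cong_diff cong_refl)
      thus ?thesis by simp
    qed
    hence "eps p (G x y - Tr p n (a * x) - b * y) = eps p ((f (nat y) x - Tr p n (a * x)) + - (b * y))"
      by (rule eps_cong[OF p0])
    thus "eps p (G x y - Tr p n (a * x) - b * y) = eps p (- (b * y)) * eps p (f (nat y) x - Tr p n (a * x))"
      by (simp only: eps_add mult.commute)
  qed
  also have "\<dots> = (\<Sum>y\<in>{0..<int p}. \<Sum>x\<in>UNIV. eps p (- (b * y)) * eps p (f (nat y) x - Tr p n (a * x)))"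
    by (rule sum.swap)
  also have "\<dots> = (\<Sum>y\<in>{0..<int p}. eps p (- (b * y)) * walsh p n (f (nat y)) a)"
    unfolding walsh_def by (simp only: sum_distrib_left)
  also have "\<dots> = (\<Sum>y\<in>{0..<int p}. if y = int k0 then eps p (- (b * y)) * walsh p n (f (nat y)) a else 0)"
  proof (rule sum.cong[OF refl])
    fix y assume y: "y \<in> {0..<int p}"
    show "eps p (- (b * y)) * walsh p n (f (nat y)) a = (if y = int k0 then eps p (- (b * y)) * walsh p n (f (nat y)) a else 0)"
    proof (cases "y = int k0")
      case False
      hence "nat y \<noteq> k0" "nat y < p" using y by auto
      thus ?thesis using W0 False by simp
    qed simp
  qed
  also have "\<dots> = eps p (- (b * int k0)) * walsh p n (f k0) a" using k0 by simp
  finally have "cmod (walsh2 p n G a b) = cmod (walsh p n (f k0) a)" by (simp add: norm_mult)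
  moreover have "(cmod (walsh p n (f k0) a))^2 \<in> {0, real p ^ (n+1)}" using nb k0 unfolding near_bent_def by blast
  moreover have "(cmod (walsh p n (f k0) a))^2 \<noteq> 0" using k0 by (simp add: supp_walsh_def)
  ultimately show "(cmod (walsh2 p n G a b))^2 = real p ^ (n+1)" by auto
qed

end

theorem theorem1:
  fixes f :: "nat \<Rightarrow> 'a::{field,finite} \<Rightarrow> int" and p n :: nat
  assumes "prime p" and "n \<ge> 1"
    and "CHAR('a) = p" and "CARD('a) = p ^ n"
    and "\<And>k. k < p \<Longrightarrow> near_bent p n (f k)"
    and "\<And>i j. i < p \<Longrightarrow> j < p \<Longrightarrow> i \<noteq> j \<Longrightarrow>
           supp_walsh p n (f i) \<inter> supp_walsh p n (f j) = {}"
  shows "bent2 p n (\<lambda>x y. (int p - 1) *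
           (\<Sum>k<p. (\<Prod>j\<in>{0..<int p} - {int k}. (y - j)) * f k x))"
  using main[OF assms(1,3,4,2), of f] assms(5,6) by blast

end
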